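(* There exist a constant $c>1$ and trees $T$ with arbitrarily large total domination number $\gamma_t=\gamma_t(T)$ such that, with $n$ the order of $T$, $$\Gamma_t(T)\ge c^{\gamma_t}\left(\frac{n-\frac{\gamma_t}{2}}{\frac{\gamma_t}{2}}\right)^{\gamma_t/2}.$$
   Context: For a graph $G$ without isolated vertices, a set $D\subseteq V(G)$ is total dominating if every vertex of $G$ has a neighbour in $D$. The total domination number $\gamma_t(G)$ is the minimum size of a total dominating set, and $\Gamma_t(G)$ is the number of total dominating sets of size $\gamma_t(G)$. *)

theory Defs
  imports Complex_Main
begin

definition simple_graph :: "'a set \<Rightarrow> ('a \<Rightarrow> 'a \<Rightarrow> bool) \<Rightarrow> bool" where
  "simple_graph V E \<longleftrightarrow> finite V \<and> (\<forall>u v. E u v \<longrightarrow> u \<in> V \<and> v \<in> V)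
     \<and> (\<forall>u v. E u v \<longrightarrow> E v u) \<and> (\<forall>v. \<not> E v v)"

fun is_walk :: "('a \<Rightarrow> 'a \<Rightarrow> bool) \<Rightarrow> 'a list \<Rightarrow> bool" where
  "is_walk E [] = False"
| "is_walk E [v] = True"
| "is_walk E (u # v # vs) = (E u v \<and> is_walk E (v # vs))"

definition connected_graph :: "'a set \<Rightarrow> ('a \<Rightarrow> 'a \<Rightarrow> bool) \<Rightarrow> bool" where
  "connected_graph V E \<longleftrightarrow> V \<noteq> {} \<and>
     (\<forall>u\<in>V. \<forall>v\<in>V. \<exists>p. set p \<subseteq> V \<and> is_walk E p \<and> hd p = u \<and> last p = v)"

definition has_cycle :: "'a set \<Rightarrow> ('a \<Rightarrow> 'a \<Rightarrow> bool) \<Rightarrow> bool" where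
  "has_cycle V E \<longleftrightarrow> (\<exists>p. length p \<ge> 3 \<and> distinct p \<and> set p \<subseteq> V \<and> is_walk E p
     \<and> E (last p) (hd p))"

definition is_tree :: "'a set \<Rightarrow> ('a \<Rightarrow> 'a \<Rightarrow> bool) \<Rightarrow> bool" where
  "is_tree V E \<longleftrightarrow> simple_graph V E \<and> connected_graph V E \<and> \<not> has_cycle V E"

definition total_dominating :: "'a set \<Rightarrow> ('a \<Rightarrow> 'a \<Rightarrow> bool) \<Rightarrow> 'a set \<Rightarrow> bool" where
  "total_dominating V E D \<longleftrightarrow> D \<subseteq> V \<and> (\<forall>v\<in>V. \<exists>u\<in>D. E v u)"

definition gamma_t :: "'a set \<Rightarrow> ('a \<Rightarrow> 'a \<Rightarrow> bool) \<Rightarrow> nat" where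
  "gamma_t V E = (LEAST k. \<exists>D. total_dominating V E D \<and> card D = k)"

definition Gamma_t :: "'a set \<Rightarrow> ('a \<Rightarrow> 'a \<Rightarrow> bool) \<Rightarrow> nat" where
  "Gamma_t V E = card {D. total_dominating V E D \<and> card D = gamma_t V E}"

end

theory Submission
  imports Defs "HOL-Library.FuncSet"
begin

definition pl :: "nat \<Rightarrow> nat" where
  "pl j = (if j \<in> {1,2,3,10} then 0 else if j \<in> {4,5,6,7,8,9,16,17,18,19,20,21} then j - 3
     else if j \<in> {11,12} then j - 1 else if j \<in> {13,14,15} then 12 else 0)"

definition adjl :: "nat \<Rightarrow> nat \<Rightarrow> bool" where
  "adjl j q \<longleftrightarrow> (0<q \<and> q<22 \<and> pl q = j) \<or> (0<j \<and> j<22 \<and> pl j = q)"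

definition Wl :: "nat \<Rightarrow> bool" where
  "Wl j \<longleftrightarrow> j \<in> {4,5,6,7,8,9,10,11,16,17,18,19,20,21}"

definition inD :: "nat \<Rightarrow> nat \<Rightarrow> nat \<Rightarrow> bool" where
  "inD c0 c1 j \<longleftrightarrow> j \<in> {4,5,6,16,17,18}
    \<or> (j \<in> {1,2,3} \<and> odd (c1 div 2^(j-1))) \<or> (j \<in> {7,8,9} \<and> even (c1 div 2^(j-7)))
    \<or> (j \<in> {13,14,15} \<and> odd (c0 div 2^(j-13))) \<or> (j \<in> {19,20,21} \<and> even (c0 div 2^(j-19)))
    \<or> (j = 0 \<and> 8 \<le> c0) \<or> (j = 11 \<and> c0 < 8) \<or> (j = 12 \<and> 8 \<le> c1) \<or> (j = 10 \<and> c1 < 8)"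

definition T :: "nat set" where "T = {0,1,2,3,4,5,6,7,9,10,11,12,13,14,15}"

lemma j22: "j < (22::nat) \<Longrightarrow> j \<in> {21,20,19,18,17,16,15,14,13,12,11,10,9,8,7,6,5,4,3,2,1,0}"
proof -
  assume "j < 22"
  then have "j \<in> {..<22}" by simp
  then show ?thesis by (simp add: lessThan_nat_numeral)
qed

lemma pl_lt: "\<forall>j\<in>{1..<22}. pl j < j"
  by (auto simp: pl_def)

lemma pl_lt22: "pl j < 22"
  by (auto simp: pl_def)

definition own :: "nat \<Rightarrow> nat" where
  "own q = (if q \<in> {1,2,3,4,5,6,13,14,15,16,17,18} then q + 3 else if q \<in> {7,8,9,19,20,21} then q - 3
     else if q \<in> {0,11} then 10 else 11)"

lemma wit_own: assumes "Wl j" "adjl j q" shows "j = own q"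
proof -
  have j: "j \<in> {4,5,6,7,8,9,10,11,16,17,18,19,20,21}" using assms(1) by (simp add: Wl_def)
  from assms(2) consider "q < 22" "pl q = j" | "pl j = q" unfolding adjl_def by blast
  then show ?thesis
  proof cases
    case 1
    from j22[OF 1(1)] show ?thesis using 1(2) j by (elim insertE emptyE) (simp_all add: pl_def own_def)
  next
    case 2
    from j show ?thesis using 2 by (elim insertE emptyE) (simp_all add: pl_def own_def)
  qed
qed

lemma wit_disj: "\<forall>j\<in>{0..<22}. \<forall>j'\<in>{0..<22}. \<forall>q\<in>{0..<22}. Wl j \<and> Wl j' \<and> adjl j q \<and> adjl j' q \<longrightarrow> j = j'"
  using wit_own by metis

lemma wit_card: "card {j. j<22 \<and> Wl j} = 14"
proof -
  have "{j. j<22 \<and> Wl j} = {4,5,6,7,8,9,10,11,16,17,18,19,20,21}" by (auto simp: Wl_def)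
  then show ?thesis by simp
qed

lemma bitT: "c \<in> T \<Longrightarrow> 8 \<le> c \<Longrightarrow> odd c \<or> odd (c div 2) \<or> odd (c div 4)"
  by (auto simp: T_def)

definition wit :: "nat \<Rightarrow> nat \<Rightarrow> nat \<Rightarrow> nat" where
  "wit c0 c1 j = (if j \<in> {7,8,9,19,20,21} then j - 3 else if j \<in> {1,2,3,13,14,15} then j + 3
    else if j \<in> {4,5,6} then (if odd (c1 div 2^(j-4)) then j - 3 else j + 3)
    else if j \<in> {16,17,18} then (if odd (c0 div 2^(j-16)) then j - 3 else j + 3)
    else if j = 10 then (if 8 \<le> c0 then 0 else 11)
    else if j = 11 then (if 8 \<le> c1 then 12 else 10)
    else if j = 0 then (if c1 < 8 then 10 else if odd c1 then 1 else if odd (c1 div 2) then 2 else 3)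
    else if c0 < 8 then 11 else if odd c0 then 13 else if odd (c0 div 2) then 14 else 15)"

lemma loc_wit: assumes "c0 \<in> T" "c1 \<in> T" "j < 22"
  shows "wit c0 c1 j < 22 \<and> adjl j (wit c0 c1 j) \<and> inD c0 c1 (wit c0 c1 j)"
proof -
  have b0: "8 \<le> c0 \<Longrightarrow> odd c0 \<or> odd (c0 div 2) \<or> odd (c0 div 4)" using bitT assms(1) by blast
  have b1: "8 \<le> c1 \<Longrightarrow> odd c1 \<or> odd (c1 div 2) \<or> odd (c1 div 4)" using bitT assms(2) by blast
  from j22[OF assms(3)] show ?thesis
    using b0 b1 by (elim insertE emptyE) (auto simp: wit_def adjl_def pl_def inD_def)
qed

lemma loc_tdsT: "\<forall>c0\<in>T. \<forall>c1\<in>T. \<forall>j\<in>{0..<22}. \<exists>q\<in>{0..<22}. adjl j q \<and> inD c0 c1 q"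
proof (intro ballI)
  fix c0 c1 j assume "c0 \<in> T" "c1 \<in> T" "j \<in> {0..<(22::nat)}"
  then have "wit c0 c1 j < 22 \<and> adjl j (wit c0 c1 j) \<and> inD c0 c1 (wit c0 c1 j)"
    using loc_wit by simp
  then show "\<exists>q\<in>{0..<22}. adjl j q \<and> inD c0 c1 q" by auto
qed

definition hh :: "nat \<Rightarrow> nat" where
  "hh j = (if j \<in> {4,5,6} then j - 4 else if j \<in> {16,17,18} then j - 13 else if j \<in> {1,2,3} then j + 5
     else if j \<in> {7,8,9} then j - 1 else if j \<in> {13,14,15} then j - 4 else if j \<in> {19,20,21} then j - 10
     else if j \<in> {0,11} then 12 else 13)"

definition gg :: "nat \<Rightarrow> nat \<Rightarrow> nat \<Rightarrow> nat" where
  "gg c0 c1 i = (if i < 3 then i + 4 else if i < 6 then i + 13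
     else if i < 9 then (if odd (c1 div 2^(i-6)) then i - 5 else i + 1)
     else if i < 12 then (if odd (c0 div 2^(i-9)) then i + 4 else i + 10)
     else if i = 12 then (if 8 \<le> c0 then 0 else 11) else (if 8 \<le> c1 then 12 else 10))"

lemma hh_gg: assumes "j < 22" "inD c0 c1 j" shows "hh j < 14 \<and> gg c0 c1 (hh j) = j"
  using j22[OF assms(1)] assms(2)
  by (elim insertE emptyE) (auto simp: hh_def gg_def inD_def)

lemma card14: "card {j. j<22 \<and> inD c0 c1 j} \<le> 14"
proof -
  let ?S = "{j. j<22 \<and> inD c0 c1 j}"
  have "inj_on hh ?S"
  proof (rule inj_onI)
    fix x y assume "x \<in> ?S" "y \<in> ?S" "hh x = hh y"
    then show "x = y" using hh_gg by (metis (no_types, lifting) mem_Collect_eq)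
  qed
  moreover have "hh ` ?S \<subseteq> {..<14}" using hh_gg by auto
  ultimately have "card ?S \<le> card {..<14::nat}" by (intro card_inj_on_le) auto
  then show ?thesis by simp
qed

definition dec0 :: "(nat \<Rightarrow> bool) \<Rightarrow> nat" where
  "dec0 g = (if g 0 then 8 else 0) + (if g 13 then 1 else 0) + (if g 14 then 2 else 0) + (if g 15 then 4 else 0)"
definition dec1 :: "(nat \<Rightarrow> bool) \<Rightarrow> nat" where
  "dec1 g = (if g 12 then 8 else 0) + (if g 1 then 1 else 0) + (if g 2 then 2 else 0) + (if g 3 then 4 else 0)"

lemma dec0_ok: "c0 \<in> T \<Longrightarrow> dec0 (inD c0 c1) = c0"
  by (auto simp: T_def dec0_def inD_def)
lemma dec1_ok: "c1 \<in> T \<Longrightarrow> dec1 (inD c0 c1) = c1"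
  by (auto simp: T_def dec1_def inD_def)

lemma decodeT: "\<forall>c0\<in>T. \<forall>c1\<in>T. dec0 (inD c0 c1) = c0 \<and> dec1 (inD c0 c1) = c1"
  using dec0_ok dec1_ok by blast

definition par :: "nat \<Rightarrow> nat" where
  "par v = (if v mod 22 = 0 then v - 22 else 22*(v div 22) + pl (v mod 22))"

definition EE :: "nat \<Rightarrow> nat \<Rightarrow> nat \<Rightarrow> bool" where
  "EE k u v \<longleftrightarrow> u < 22*k \<and> v < 22*k \<and> ((0<v \<and> u = par v) \<or> (0<u \<and> v = par u))"

lemma par_lt: "0 < v \<Longrightarrow> par v < v"
proof (cases "v mod 22 = 0")
  case True
  moreover assume "0 < v"
  ultimately show ?thesis by (simp add: par_def)
next
  case False
  then have "v mod 22 \<in> {1..<22}" by auto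
  then have "pl (v mod 22) < v mod 22" using pl_lt by blast
  moreover have "v = 22*(v div 22) + v mod 22" by simp
  moreover have "par v = 22*(v div 22) + pl (v mod 22)" using False by (simp add: par_def)
  ultimately show ?thesis by linarith
qed

lemma EE_sym: "EE k u v \<Longrightarrow> EE k v u"
  by (auto simp: EE_def)

lemma EE_irrefl: "\<not> EE k v v"
  using par_lt by (auto simp: EE_def) (metis less_irrefl)+

lemma EE_lower: "EE k m q \<Longrightarrow> q < m \<Longrightarrow> q = par m"
  using par_lt by (auto simp: EE_def) (metis not_less_iff_gr_or_eq order.strict_trans)

lemma is_walk_nonempty: "is_walk E p \<Longrightarrow> p \<noteq> []"
  by (cases p) auto

lemma is_walk_append: "is_walk E p \<Longrightarrow> is_walk E q \<Longrightarrow> last p = hd q \<Longrightarrow> is_walk E (p @ tl q)"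
proof (induction E p rule: is_walk.induct)
  case (1 E) then show ?case by simp
next
  case (2 E v) then show ?case by (cases q) auto
next
  case (3 E u v vs) then show ?case by simp
qed

lemma is_walk_rev: "(\<And>u v. E u v \<Longrightarrow> E v u) \<Longrightarrow> is_walk E p \<Longrightarrow> is_walk E (rev p)"
proof (induction E p rule: is_walk.induct)
  case (1 E) then show ?case by simp
next
  case (2 E v) then show ?case by simp
next
  case (3 E u v vs)
  then have "is_walk E (rev vs @ [v])" by simp
  moreover have "is_walk E [v, u]" using 3 by simp
  ultimately have "is_walk E ((rev vs @ [v]) @ tl [v,u])"
    by (intro is_walk_append) auto
  then show ?case by simp
qed


lemma walk_nth: "is_walk E p \<Longrightarrow> Suc j < length p \<Longrightarrow> E (p!j) (p!Suc j)"
proof (induction E p arbitrary: j rule: is_walk.induct)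
  case (3 E u v vs) then show ?case by (cases j) auto
qed auto

lemma walk_root: "v < 22*k \<Longrightarrow> \<exists>p. set p \<subseteq> {..<22*k} \<and> is_walk (EE k) p \<and> hd p = v \<and> last p = 0"
proof (induction v rule: less_induct)
  case (less v)
  show ?case
  proof (cases "v = 0")
    case True then show ?thesis using less by (intro exI[of _ "[0]"]) auto
  next
    case False
    then have lt: "par v < v" using par_lt by simp
    with less obtain p where p: "set p \<subseteq> {..<22*k}" "is_walk (EE k) p" "hd p = par v" "last p = 0"
      by fastforce
    have ne: "p \<noteq> []" using p(2) is_walk_nonempty by blast
    have "EE k v (par v)" using False less.prems lt by (auto simp: EE_def)
    then have "is_walk (EE k) (v # p)" using p ne by (cases p) auto
    then show ?thesis using p ne less.prems by (intro exI[of _ "v # p"]) auto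
  qed
qed

lemma tree: assumes "k > 0" shows "is_tree {..<22*k} (EE k)"
  unfolding is_tree_def
proof (intro conjI)
  show "simple_graph {..<22*k} (EE k)"
    unfolding simple_graph_def using EE_sym EE_irrefl by (auto simp: EE_def)
  show "connected_graph {..<22*k} (EE k)"
    unfolding connected_graph_def
  proof (intro conjI ballI)
    have "0 \<in> {..<22*k}" using assms by simp
    then show "{..<22*k} \<noteq> {}" by blast
    fix u v assume u: "u \<in> {..<22*k}" and v: "v \<in> {..<22*k}"
    obtain p where p: "set p \<subseteq> {..<22*k}" "is_walk (EE k) p" "hd p = u" "last p = 0"
      using walk_root u by blast
    obtain q where q: "set q \<subseteq> {..<22*k}" "is_walk (EE k) q" "hd q = v" "last q = 0"
      using walk_root v by blast
    have qn: "q \<noteq> []" using q(2) is_walk_nonempty by blast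
    have pn: "p \<noteq> []" using p(2) is_walk_nonempty by blast
    have rq: "is_walk (EE k) (rev q)" using is_walk_rev[OF _ q(2)] EE_sym by blast
    have w: "is_walk (EE k) (p @ tl (rev q))"
      using is_walk_append[OF p(2) rq] p(4) q(4) qn by (simp add: hd_rev)
    have s: "set (p @ tl (rev q)) \<subseteq> {..<22*k}"
    proof -
      have "set (tl (rev q)) \<subseteq> set (rev q)" by (cases "rev q") auto
      then show ?thesis using p(1) q(1) by auto
    qed
    have l: "last (p @ tl (rev q)) = v"
    proof (cases "tl (rev q) = []")
      case True
      then have "q = [v]" using qn q(3) by (cases q rule: rev_cases) auto
      then show ?thesis using True p(4) q(4) by simp
    next
      case False
      then have "last (tl (rev q)) = last (rev q)" by (simp add: last_tl)
      then show ?thesis using False q(3) qn by (simp add: last_rev)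
    qed
    show "\<exists>p. set p \<subseteq> {..<22*k} \<and> is_walk (EE k) p \<and> hd p = u \<and> last p = v"
      using w s l p(3) pn by (intro exI[of _ "p @ tl (rev q)"]) auto
  qed
  show "\<not> has_cycle {..<22*k} (EE k)"
  proof
    assume "has_cycle {..<22*k} (EE k)"
    then obtain p where p: "length p \<ge> 3" "distinct p" "is_walk (EE k) p" "EE k (last p) (hd p)"
      unfolding has_cycle_def by blast
    define L where "L = length p"
    have ne: "p \<noteq> []" using p(1) by auto
    define nxt where "nxt j = (if Suc j < L then Suc j else 0)" for j
    have adj: "EE k (p!j) (p!nxt j)" if "j < L" for j
    proof (cases "Suc j < L")
      case True then show ?thesis using walk_nth[OF p(3)] by (simp add: nxt_def L_def)
    next
      case False
      then have "j = L - 1" using that by simp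
      then have "p!j = last p" "p!nxt j = hd p" using ne False
        by (simp_all add: nxt_def L_def last_conv_nth hd_conv_nth)
      then show ?thesis using p(4) by simp
    qed
    define m where "m = Max (set p)"
    have "m \<in> set p" using ne by (simp add: m_def)
    then obtain i where i: "i < L" "p!i = m" by (auto simp: in_set_conv_nth L_def)
    define prv where "prv = (if i = 0 then L - 1 else i - 1)"
    have prvL: "prv < L" "nxt prv = i" using i p(1) by (auto simp: prv_def nxt_def L_def)
    have nxtL: "nxt i < L" using i p(1) by (auto simp: nxt_def L_def)
    have neq: "nxt i \<noteq> prv" using i p(1) by (auto simp: nxt_def prv_def L_def)
    have a1: "EE k m (p!nxt i)" using adj[OF i(1)] i by simp
    have a2: "EE k m (p!prv)" using adj[OF prvL(1)] prvL i EE_sym by metis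
    have le1: "p!nxt i \<le> m" using nxtL by (simp add: m_def L_def)
    have le2: "p!prv \<le> m" using prvL by (simp add: m_def L_def)
    have "p!nxt i \<noteq> m" using a1 EE_irrefl by metis
    then have e1: "p!nxt i = par m" using EE_lower[OF a1] le1 by simp
    have "p!prv \<noteq> m" using a2 EE_irrefl by metis
    then have e2: "p!prv = par m" using EE_lower[OF a2] le2 by simp
    have "p!nxt i \<noteq> p!prv" using neq nxtL prvL(1) p(2) by (simp add: nth_eq_iff_index_eq L_def)
    then show False using e1 e2 by simp
  qed
qed


lemma card_blocks:
  fixes k :: nat and P :: "nat \<Rightarrow> nat \<Rightarrow> bool"
  shows "card {v. v < 22*k \<and> P (v div 22) (v mod 22)} = (\<Sum>i<k. card {j. j<22 \<and> P i j})"
proof -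
  define S where "S = (SIGMA i:{..<k}. {j. j<22 \<and> P i j})"
  have eq: "{v. v < 22*k \<and> P (v div 22) (v mod 22)} = (\<lambda>(i,j). 22*i+j) ` S"
  proof (intro equalityI subsetI)
    fix v assume v: "v \<in> {v. v < 22*k \<and> P (v div 22) (v mod 22)}"
    then have "(v div 22, v mod 22) \<in> S" by (auto simp: S_def less_mult_imp_div_less)
    moreover have "v = (\<lambda>(i,j). 22*i+j) (v div 22, v mod 22)" by simp
    ultimately show "v \<in> (\<lambda>(i,j). 22*i+j) ` S" by blast
  next
    fix v assume "v \<in> (\<lambda>(i,j). 22*i+j) ` S"
    then obtain i j where ij: "i < k" "j < 22" "P i j" "v = 22*i+j" by (auto simp: S_def)
    have "22*i + j < 22*k" using ij by linarith
    then show "v \<in> {v. v < 22*k \<and> P (v div 22) (v mod 22)}" using ij by simp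
  qed
  have inj: "inj_on (\<lambda>(i,j). 22*i+j::nat) S"
  proof (rule inj_onI, clarify)
    fix i j i' j' assume "(i,j) \<in> S" "(i',j') \<in> S" "22*i+j = 22*i'+(j'::nat)"
    then have h: "j < 22" "j' < 22" "22*i+j = 22*i'+(j'::nat)" unfolding S_def by auto
    have "i = (22*i+j) div 22" "i' = (22*i'+j') div 22" using h by simp_all
    then have "i = i'" using h(3) by simp
    then show "i = i' \<and> j = j'" using h(3) by simp
  qed
  have "card {v. v < 22*k \<and> P (v div 22) (v mod 22)} = card S"
    using eq inj card_image by metis
  also have "\<dots> = (\<Sum>i<k. card {j. j<22 \<and> P i j})" unfolding S_def by simp
  finally show ?thesis .
qed


definition Dset :: "nat \<Rightarrow> (nat \<Rightarrow> nat) \<Rightarrow> nat set" where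
  "Dset k F = {v. v < 22*k \<and> inD (F (2*(v div 22))) (F (2*(v div 22)+1)) (v mod 22)}"

definition Wset :: "nat \<Rightarrow> nat set" where
  "Wset k = {v. v < 22*k \<and> Wl (v mod 22)}"

lemma adjl_EE: assumes "i < k" "j < 22" "q < 22" "adjl j q" shows "EE k (22*i+j) (22*i+q)"
proof -
  have b1: "22*i+j < 22*k" "22*i+q < 22*k" using assms by linarith+
  from assms(4) show ?thesis
  proof (cases rule: disjE[OF assms(4)[unfolded adjl_def]])
    case 1
    then have "par (22*i+q) = 22*i+j" using assms by (simp add: par_def)
    then show ?thesis using b1 1 by (simp add: EE_def)
  next
    case 2
    then have "par (22*i+j) = 22*i+q" using assms by (simp add: par_def)
    then show ?thesis using b1 2 by (simp add: EE_def)
  qed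
qed

lemma Dset_tds: assumes "F \<in> PiE {..<2*k} (\<lambda>_. T)" shows "total_dominating {..<22*k} (EE k) (Dset k F)"
  unfolding total_dominating_def
proof (intro conjI ballI)
  show "Dset k F \<subseteq> {..<22*k}" by (auto simp: Dset_def)
  fix v assume "v \<in> {..<22*k}"
  then have v: "v < 22*k" by simp
  define i where "i = v div 22"
  define j where "j = v mod 22"
  have i: "i < k" using v by (simp add: i_def less_mult_imp_div_less)
  have j: "j < 22" by (simp add: j_def)
  have vij: "v = 22*i+j" by (simp add: i_def j_def)
  have F: "F (2*i) \<in> T" "F (2*i+1) \<in> T" using assms i by (simp_all add: PiE_iff)
  have j': "j \<in> {0..<22}" using j by simp
  obtain q where q: "q < 22" "adjl j q" "inD (F (2*i)) (F (2*i+1)) q"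
    using loc_tdsT[rule_format, OF F j'] by auto
  have "EE k v (22*i+q)" using adjl_EE[OF i j q(1,2)] vij by simp
  moreover have "22*i+q \<in> Dset k F"
  proof -
    have "22*i+q < 22*k" using i q by linarith
    then show ?thesis using q by (simp add: Dset_def)
  qed
  ultimately show "\<exists>u\<in>Dset k F. EE k v u" by blast
qed

lemma Dset_card_le: assumes "F \<in> PiE {..<2*k} (\<lambda>_. T)" shows "card (Dset k F) \<le> 14*k"
proof -
  have "card (Dset k F) = (\<Sum>i<k. card {j. j<22 \<and> inD (F (2*i)) (F (2*i+1)) j})"
    unfolding Dset_def by (rule card_blocks)
  also have "\<dots> \<le> (\<Sum>i<k. 14)"
    by (rule sum_mono) (rule card14)
  finally show ?thesis by simp
qed

lemma Wset_card: "card (Wset k) = 14*k"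
proof -
  have "card (Wset k) = (\<Sum>i<k. card {j. j<22 \<and> Wl j})"
    unfolding Wset_def by (rule card_blocks)
  then show ?thesis using wit_card by simp
qed

lemma wit_adj: assumes "EE k z q" "Wl (z mod 22)"
  shows "q div 22 = z div 22 \<and> adjl (z mod 22) (q mod 22)"
proof -
  have zj: "0 < z mod 22" "z mod 22 < 22" using assms(2) by (auto simp: Wl_def)
  have plz: "pl (z mod 22) < 22" using pl_lt22 zj by auto
  from assms(1) consider "0 < z" "q = par z" | "0 < q" "z = par q" unfolding EE_def by blast
  then show ?thesis
  proof cases
    case 1
    then have "q = 22*(z div 22) + pl (z mod 22)" using zj by (simp add: par_def)
    then show ?thesis using plz zj by (simp add: adjl_def)
  next
    case 2
    show ?thesis
    proof (cases "q mod 22 = 0")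
      case True
      then have "z = q - 22" using 2 by (simp add: par_def)
      moreover have "q \<ge> 22" using True 2(1) by (metis mod_less not_less less_irrefl)
      ultimately have "z mod 22 = 0" using True by (metis le_add_diff_inverse2 mod_add_self2)
      then show ?thesis using zj by simp
    next
      case False
      have qr: "q mod 22 < 22" by simp
      have plq: "pl (q mod 22) < 22" using pl_lt22 qr by auto
      have "z = 22*(q div 22) + pl (q mod 22)" using 2 False by (simp add: par_def)
      then show ?thesis using plq False by (simp add: adjl_def)
    qed
  qed
qed

lemma tds_lower:
  assumes "total_dominating V E D" "finite V" "W \<subseteq> V"
    "\<forall>z\<in>W. \<forall>z'\<in>W. \<forall>q. E z q \<and> E z' q \<longrightarrow> z = z'"
  shows "card W \<le> card D"
proof -
  have ex: "\<forall>z\<in>W. \<exists>q\<in>D. E z q" using assms(1,3) unfolding total_dominating_def by blast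
  define f where "f z = (SOME q. q \<in> D \<and> E z q)" for z
  have f: "f z \<in> D \<and> E z (f z)" if "z \<in> W" for z
    using ex that unfolding f_def by (metis (mono_tags, lifting) someI_ex)
  have "inj_on f W" using f assms(4) by (metis inj_onI)
  moreover have "f ` W \<subseteq> D" using f by blast
  moreover have "finite D" using assms(1,2) unfolding total_dominating_def by (metis finite_subset)
  ultimately show ?thesis by (metis card_inj_on_le)
qed

lemma lower14: assumes "total_dominating {..<22*k} (EE k) D" shows "14*k \<le> card D"
proof -
  have "card (Wset k) \<le> card D"
  proof (rule tds_lower[OF assms])
    show "Wset k \<subseteq> {..<22*k}" by (auto simp: Wset_def)
    show "\<forall>z\<in>Wset k. \<forall>z'\<in>Wset k. \<forall>q. EE k z q \<and> EE k z' q \<longrightarrow> z = z'"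
    proof (intro ballI allI impI)
      fix z z' q assume z: "z \<in> Wset k" "z' \<in> Wset k" "EE k z q \<and> EE k z' q"
      have w: "Wl (z mod 22)" "Wl (z' mod 22)" using z(1,2) by (auto simp: Wset_def)
      have a: "q div 22 = z div 22" "adjl (z mod 22) (q mod 22)" using wit_adj z(3) w(1) by blast+
      have b: "q div 22 = z' div 22" "adjl (z' mod 22) (q mod 22)" using wit_adj z(3) w(2) by blast+
      have "z mod 22 = z' mod 22" using wit_own[OF w(1) a(2)] wit_own[OF w(2) b(2)] by simp
      moreover have "z div 22 = z' div 22" using a(1) b(1) by simp
      ultimately show "z = z'" by (metis div_mult_mod_eq)
    qed
  qed simp
  then show ?thesis using Wset_card by simp
qed

lemma Dset_card: assumes "F \<in> PiE {..<2*k} (\<lambda>_. T)" shows "card (Dset k F) = 14*k"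
  using Dset_card_le[OF assms] lower14[OF Dset_tds[OF assms]] by simp

lemma F0: "(\<lambda>h. if h < 2*k then 0 else undefined) \<in> PiE {..<2*k} (\<lambda>_. T)"
  by (simp add: PiE_iff T_def extensional_def)

lemma gamma14: "gamma_t {..<22*k} (EE k) = 14*k"
  unfolding gamma_t_def
proof (rule Least_equality)
  show "\<exists>D. total_dominating {..<22*k} (EE k) D \<and> card D = 14*k"
    using Dset_tds[OF F0] Dset_card[OF F0] by blast
  show "\<And>y. \<exists>D. total_dominating {..<22*k} (EE k) D \<and> card D = y \<Longrightarrow> 14 * k \<le> y"
    using lower14 by blast
qed

lemma Dset_mem: assumes "i < k" "j < (22::nat)"
  shows "(22*i+j \<in> Dset k H) = inD (H (2*i)) (H (2*i+1)) j"
proof -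
  have lt: "22*i+j < 22*k" using assms by linarith
  have d: "(22*i+j) div 22 = i" "(22*i+j) mod 22 = j" using assms(2) by simp_all
  show ?thesis unfolding Dset_def using lt d by simp
qed

lemma Dset_inj: "inj_on (Dset k) (PiE {..<2*k} (\<lambda>_. T))"
proof (rule inj_onI)
  fix F G assume F: "F \<in> PiE {..<2*k} (\<lambda>_. T)" and G: "G \<in> PiE {..<2*k} (\<lambda>_. T)"
    and eq: "Dset k F = Dset k G"
  show "F = G"
  proof
    fix h show "F h = G h"
    proof (cases "h < 2*k")
      case False
      then have hn: "h \<notin> {..<2*k}" by simp
      show ?thesis using PiE_arb[OF F hn] PiE_arb[OF G hn] by simp
    next
      case True
      define i where "i = h div 2"
      have i: "i < k" using True by (simp add: i_def)
      have ag: "inD (F (2*i)) (F (2*i+1)) j = inD (G (2*i)) (G (2*i+1)) j" if "j < 22" for j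
        using Dset_mem[OF i that, of F] Dset_mem[OF i that, of G] eq by simp
      have FT: "F (2*i) \<in> T" "F (2*i+1) \<in> T" "G (2*i) \<in> T" "G (2*i+1) \<in> T" using F G i by (simp_all add: PiE_iff)
      have d0: "dec0 (inD (F (2*i)) (F (2*i+1))) = dec0 (inD (G (2*i)) (G (2*i+1)))"
        unfolding dec0_def using ag[of 0] ag[of 13] ag[of 14] ag[of 15] by simp
      have d1: "dec1 (inD (F (2*i)) (F (2*i+1))) = dec1 (inD (G (2*i)) (G (2*i+1)))"
        unfolding dec1_def using ag[of 12] ag[of 1] ag[of 2] ag[of 3] by simp
      have dF: "dec0 (inD (F (2*i)) (F (2*i+1))) = F (2*i)" "dec1 (inD (F (2*i)) (F (2*i+1))) = F (2*i+1)"
        using decodeT[rule_format, OF FT(1,2)] by blast+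
      have dG: "dec0 (inD (G (2*i)) (G (2*i+1))) = G (2*i)" "dec1 (inD (G (2*i)) (G (2*i+1))) = G (2*i+1)"
        using decodeT[rule_format, OF FT(3,4)] by blast+
      have e0: "F (2*i) = G (2*i)" using dF(1) dG(1) d0 by argo
      have e1: "F (2*i+1) = G (2*i+1)" using dF(2) dG(2) d1 by argo
      have "h = 2*i \<or> h = 2*i+1"
        using div_mult_mod_eq[of h 2] mod_less_divisor[of 2 h] unfolding i_def by linarith
      then show ?thesis using e0 e1 by auto
    qed
  qed
qed

lemma Gamma_ge: "15^(2*k) \<le> Gamma_t {..<22*k} (EE k)"
proof -
  have "Dset k ` PiE {..<2*k} (\<lambda>_. T) \<subseteq> {D. total_dominating {..<22*k} (EE k) D \<and> card D = gamma_t {..<22*k} (EE k)}"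
  proof (rule image_subsetI)
    fix F assume F: "F \<in> PiE {..<2*k} (\<lambda>_. T)"
    show "Dset k F \<in> {D. total_dominating {..<22*k} (EE k) D \<and> card D = gamma_t {..<22*k} (EE k)}"
      using Dset_tds[OF F] Dset_card[OF F] gamma14[of k] by simp
  qed
  moreover have "finite {D. total_dominating {..<22*k} (EE k) D \<and> card D = gamma_t {..<22*k} (EE k)}"
    by (rule finite_subset[of _ "Pow {..<22*k}"]) (auto simp: total_dominating_def)
  ultimately have "card (Dset k ` PiE {..<2*k} (\<lambda>_. T)) \<le> Gamma_t {..<22*k} (EE k)"
    unfolding Gamma_t_def by (rule card_mono[rotated])
  moreover have "card (Dset k ` PiE {..<2*k} (\<lambda>_. T)) = card (PiE {..<2*k} (\<lambda>_. T))"
    using Dset_inj card_image by blast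
  moreover have "card (PiE {..<2*k} (\<lambda>_. T)) = 15^(2*k)"
  proof -
    have "card T = 15" by (simp add: T_def)
    then show ?thesis by (simp add: card_PiE)
  qed
  ultimately show ?thesis by simp
qed

theorem mainTheorem7:
  shows "\<exists>c::real. c > 1 \<and>
    (\<forall>N::nat. \<exists>(V::nat set) E. is_tree V E \<and> card V \<ge> 2 \<and> gamma_t V E \<ge> N \<and>
       real (Gamma_t V E) \<ge> c ^ gamma_t V E *
         ((real (card V) - real (gamma_t V E) / 2) / (real (gamma_t V E) / 2))
           powr (real (gamma_t V E) / 2))"
proof -
  define a :: real where "a = 225 / (15/7)^7"
  have p7: "(15/7::real)^7 = 170859375/823543" by (simp add: power_divide)
  have a1: "1 < a" unfolding a_def p7 by simp
  define c where "c = a powr (1/14)"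
  have c1: "1 < c" unfolding c_def using a1 by (intro gr_one_powr) auto
  have main: "\<exists>(V::nat set) E. is_tree V E \<and> card V \<ge> 2 \<and> gamma_t V E \<ge> N \<and>
       real (Gamma_t V E) \<ge> c ^ gamma_t V E *
         ((real (card V) - real (gamma_t V E) / 2) / (real (gamma_t V E) / 2))
           powr (real (gamma_t V E) / 2)" for N
  proof (intro exI conjI)
    define k where "k = N + 1"
    have k: "k > 0" by (simp add: k_def)
    show "is_tree {..<22*k} (EE k)" using tree k by blast
    show "2 \<le> card {..<22*k}" using k by simp
    show "N \<le> gamma_t {..<22*k} (EE k)" unfolding gamma14 k_def by simp
    have ratio: "(real (card {..<22*k}) - real (gamma_t {..<22*k} (EE k)) / 2) / (real (gamma_t {..<22*k} (EE k)) / 2) = 15/7"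
      unfolding gamma14 using k by (simp add: field_simps)
    have ratio': "(real (card {..<22*k}) - real (7*k)) / real (7*k) = 15/7"
      using k by (simp add: field_simps)
    have g2: "real (gamma_t {..<22*k} (EE k)) / 2 = real (7*k)" by (simp add: gamma14)
    have cp: "c ^ gamma_t {..<22*k} (EE k) = a ^ k"
    proof -
      have "c ^ gamma_t {..<22*k} (EE k) = a powr (real (14*k) * (1/14))"
        unfolding c_def gamma14 using a1 by (subst powr_power) auto
      also have "\<dots> = a powr real k" by simp
      also have "\<dots> = a ^ k" using a1 by (simp add: powr_realpow)
      finally show ?thesis .
    qed
    have rp: "((15::real)/7) powr real (7*k) = ((15/7)^7)^k"
      by (subst powr_realpow) (auto simp: power_mult)
    have "c ^ gamma_t {..<22*k} (EE k) * ((real (card {..<22*k}) - real (gamma_t {..<22*k} (EE k)) / 2) / (real (gamma_t {..<22*k} (EE k)) / 2)) powr (real (gamma_t {..<22*k} (EE k)) / 2)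
        = a^k * ((15/7)^7)^k" by (simp only: cp g2 ratio' rp)
    also have "\<dots> = (a * (15/7)^7)^k" by (simp add: power_mult_distrib)
    also have "\<dots> = 225^k" by (simp add: a_def)
    also have "\<dots> = real (15^(2*k))" by (simp add: power_mult)
    also have "\<dots> \<le> real (Gamma_t {..<22*k} (EE k))" using Gamma_ge of_nat_le_iff by blast
    finally show "c ^ gamma_t {..<22*k} (EE k) * ((real (card {..<22*k}) - real (gamma_t {..<22*k} (EE k)) / 2) / (real (gamma_t {..<22*k} (EE k)) / 2)) powr (real (gamma_t {..<22*k} (EE k)) / 2) \<le> real (Gamma_t {..<22*k} (EE k))" .
  qed
  show ?thesis using c1 main by blast
qed

end
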